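(* In the setting of the context, let $(L,\nabla)\in\mathrm{Conn}(\tilde X)$, let $(L_u,\nabla,L_0)=(L\otimes_{\mathbb{C}[[z]]}\mathbb{C}((z)),\nabla,L/\lambda L)\in\mathrm{CC}(\tilde X)$ be its image, and let $(l_u,\delta,l_0)\in\widetilde{\mathrm{CC}}(\tilde X)$ be the object corresponding to $(L_u,\nabla,L_0)$ under the equivalence $\Psi$. Then $(l_u,\delta,l_0)$ is isomorphic to the image of some object of $\widetilde{\mathrm{Conn}}(\tilde X)$ under the functor $\widetilde{\mathrm{Conn}}(\tilde X)\to\widetilde{\mathrm{CC}}(\tilde X)$.
   Context: Let $t(z),d(z)\in\mathbb{C}[[z]]$ with $t^2-4d$ having a simple zero at $z=0$; $\tilde X=\operatorname{Spf}\mathbb{C}[[\tilde z]]$ is the spectral curve $\xi^2-t\xi+d=0$ in $T^*\operatorname{Spf}\mathbb{C}[[z]]=\operatorname{Spf}\mathbb{C}[\xi][[z]]$, $\tilde z=\sqrt{t^2-4d}$, $\mu=\xi\,dz|_{\tilde X}$. A $\lambda$-connection on a module $M$ is a $\mathbb{C}[[\lambda]]$-linear $\nabla:M\to M\otimes\Omega$ with $\nabla(fs)=f\nabla s+\lambda s\,df$. $\mathrm{Conn}(\tilde X)$: pairs $(L,\nabla)$ with $L$ free of rank 2 over $\mathbb{C}[[z,\lambda]]$ and $\nabla:L\to L\,dz$ a $\lambda$-connection whose reduction $\nabla_0$ satisfies $\operatorname{tr}\nabla_0=t\,dz$, $\det\nabla_0=d\,(dz)^2$. $\mathrm{CC}(\tilde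 X)$: triples $(L_u,\nabla,L_0)$ with $L_u$ free of rank 2 over $\mathbb{C}((z))[[\lambda]]$, $\nabla$ a $\lambda$-connection with the same trace/determinant condition on $\nabla_0$, and $L_0\subset L_u/\lambda L_u$ a $\mathbb{C}[[z]]$-lattice stable under $\nabla_0$. $\widetilde{\mathrm{Conn}}(\tilde X)$: pairs $(l,\delta)$, $l$ free of rank 1 over $\mathbb{C}[[\tilde z,\lambda]]$, $\delta:l\to\tilde z^{-1}l\,d\tilde z$ a $\lambda$-connection with residue $-\lambda/2$ and reduction mod $\lambda$ equal to $\mu$. $\widetilde{\mathrm{CC}}(\tilde X)$: triples $(l_u,\delta,l_0)$, $l_u$ free of rank 1 over $\mathbb{C}((\tilde z))[[\lambda]]$, $\delta:l_u\to l_u\,d\tilde z$ a $\lambda$-connection with reduction mod $\lambda$ equal to $\mu$, $l_0$ a $\mathbb{C}[[\tilde z]]$-lattice in $l_u/\lambda l_u$. Morphisms are isomorphisms compatible with all structure. The functor $\widetilde{\mathrm{Conn}}\to\widetilde{\mathrm{CC}}$ sends $(l,\delta)\mapsto(l\otimes\mathbb{C}((\tilde z)),\delta,l/\lambda l)$. The equivalence $\Psi:\widetilde{\mathrm{CC}}(\tilde X)\to\mathrm{CC}(\tilde X)$ regards $(l_u,\delta,l_0)$ as a triple over $\mathbb{C}[[z]]\subset\mathbb{C}[[\tilde z]]$, using $l_u\,dz=l_u\,d\tilde z$. *)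

theory Defs
  imports "HOL-Computational_Algebra.Formal_Laurent_Series"
begin

(* C[[z]], C[[zt]]      : complex fps   (zt stands for the coordinate \tilde z)
   C((z)), C((zt))      : complex fls
   C[[z,lambda]]        : complex fps fps  (outer variable lambda, coefficients in C[[z]])
   C((z))[[lambda]], C((zt))[[lambda]] : complex fls fps (outer variable lambda)
   Free modules are written in a basis: rank 2 = pairs, rank 1 = the ring itself. *)

type_synonym 'a mat2 = "('a \<times> 'a) \<times> ('a \<times> 'a)"

definition m11 :: "'a mat2 \<Rightarrow> 'a" where "m11 A = fst (fst A)"
definition m12 :: "'a mat2 \<Rightarrow> 'a" where "m12 A = snd (fst A)"
definition m21 :: "'a mat2 \<Rightarrow> 'a" where "m21 A = fst (snd A)"
definition m22 :: "'a mat2 \<Rightarrow> 'a" where "m22 A = snd (snd A)"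

definition mmap :: "('a \<Rightarrow> 'b) \<Rightarrow> 'a mat2 \<Rightarrow> 'b mat2" where
  "mmap f A = ((f (m11 A), f (m12 A)), (f (m21 A), f (m22 A)))"

abbreviation lam :: "complex fls fps" where "lam \<equiv> fps_X"

definition dsp :: "complex fls fps \<Rightarrow> complex fls fps" where
  "dsp f = Abs_fps (\<lambda>n. fls_deriv (f $ n))"

definition embL :: "complex fps fps \<Rightarrow> complex fls fps" where
  "embL f = Abs_fps (\<lambda>n. fps_to_fls (f $ n))"

(* the coordinate z as a power series in zt = sqrt(t^2-4d):  (t^2-4d)(zser) = zt^2 *)
definition zser :: "complex fps \<Rightarrow> complex fps \<Rightarrow> complex fps" where
  "zser t d = fps_inv (t\<^sup>2 - 4 * d) oo fps_X\<^sup>2"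

definition incl :: "complex fps \<Rightarrow> complex fps \<Rightarrow> complex fps \<Rightarrow> complex fps" where
  "incl t d f = f oo zser t d"

definition inclL :: "complex fps \<Rightarrow> complex fps \<Rightarrow> complex fls \<Rightarrow> complex fls" where
  "inclL t d x = fps_to_fls (incl t d (fls_base_factor_to_fps x))
                 * (fps_to_fls (zser t d)) powi (fls_subdegree x)"

definition inclU :: "complex fps \<Rightarrow> complex fps \<Rightarrow> complex fls fps \<Rightarrow> complex fls fps" where
  "inclU t d f = Abs_fps (\<lambda>n. inclL t d (f $ n))"

definition dzdzt :: "complex fps \<Rightarrow> complex fps \<Rightarrow> complex fls fps" where
  "dzdzt t d = fps_const (fps_to_fls (fps_deriv (zser t d)))"

(* mu = xi dz restricted to the spectral curve, as coefficient of d zt;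
   on the curve xi = (t + zt)/2 since zt = 2 xi - t *)
definition mu :: "complex fps \<Rightarrow> complex fps \<Rightarrow> complex fls" where
  "mu t d = fps_to_fls (fps_const (1/2) * (incl t d t + fps_X) * fps_deriv (zser t d))"

(* rank 2 lambda-connection on C((z))[[lambda]]^2 with matrix A (coefficient of dz) *)
definition nabla :: "complex fls fps mat2 \<Rightarrow> complex fls fps \<times> complex fls fps
                      \<Rightarrow> complex fls fps \<times> complex fls fps" where
  "nabla A s = (lam * dsp (fst s) + m11 A * fst s + m12 A * snd s,
                lam * dsp (snd s) + m21 A * fst s + m22 A * snd s)"

(* rank 1 lambda-connection on C((zt))[[lambda]] with coefficient a (of d zt) *)
definition tdelta :: "complex fls fps \<Rightarrow> complex fls fps \<Rightarrow> complex fls fps" where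
  "tdelta a g = lam * dsp g + a * g"

definition lattice2 :: "(complex fls \<times> complex fls) set \<Rightarrow> bool" where
  "lattice2 S \<longleftrightarrow> (\<exists>b1 b2 :: complex fls \<times> complex fls.
      fst b1 * snd b2 - snd b1 * fst b2 \<noteq> 0 \<and>
      S = {(fps_to_fls f1 * fst b1 + fps_to_fls f2 * fst b2,
            fps_to_fls f1 * snd b1 + fps_to_fls f2 * snd b2) | f1 f2. True})"

definition lattice1 :: "complex fls set \<Rightarrow> bool" where
  "lattice1 S \<longleftrightarrow> (\<exists>b :: complex fls. b \<noteq> 0 \<and> S = {fps_to_fls f * b | f. True})"

(* objects of Conn(X~): connection matrix A over C[[z,lambda]] in a basis of L *)
definition is_Conn :: "complex fps \<Rightarrow> complex fps \<Rightarrow> complex fps fps mat2 \<Rightarrow> bool" where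
  "is_Conn t d A \<longleftrightarrow>
     m11 A $ 0 + m22 A $ 0 = t \<and> m11 A $ 0 * m22 A $ 0 - m12 A $ 0 * m21 A $ 0 = d"

(* its image in CC(X~): (L (x) C((z)), nabla, L/lambda L = C[[z]]^2) *)
definition conn_to_cc :: "complex fps fps mat2 \<Rightarrow> complex fls fps mat2 \<times> (complex fls \<times> complex fls) set" where
  "conn_to_cc A = (mmap embL A, {(fps_to_fls f1, fps_to_fls f2) | f1 f2. True})"

definition is_tCC :: "complex fps \<Rightarrow> complex fps \<Rightarrow> complex fls fps \<Rightarrow> complex fls set \<Rightarrow> bool" where
  "is_tCC t d a l0 \<longleftrightarrow> a $ 0 = mu t d \<and> lattice1 l0"

(* objects of Conn~(X~): delta(e) = a e d zt with a \<in> zt^-1 C[[zt,lambda]],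
   residue -lambda/2, reduction mu *)
definition is_tConn :: "complex fps \<Rightarrow> complex fps \<Rightarrow> complex fls fps \<Rightarrow> bool" where
  "is_tConn t d b \<longleftrightarrow>
     (\<forall>n. \<forall>k < -1. fls_nth (b $ n) k = 0) \<and>
     (\<forall>n. fls_nth (b $ n) (-1) = (if n = 1 then - 1/2 else 0)) \<and>
     b $ 0 = mu t d"

definition tconn_to_tcc :: "complex fls fps \<Rightarrow> complex fls fps \<times> complex fls set" where
  "tconn_to_tcc b = (b, {fps_to_fls f | f. True})"

(* isomorphisms in CC~(X~): multiplication by a unit of C((zt))[[lambda]] *)
definition tCC_iso :: "complex fls fps \<times> complex fls set \<Rightarrow> complex fls fps \<times> complex fls set \<Rightarrow> bool" where
  "tCC_iso X Y \<longleftrightarrow> (\<exists>u. u $ 0 \<noteq> 0 \<and>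
      (\<forall>g. tdelta (fst Y) (u * g) = u * tdelta (fst X) g) \<and>
      (\<lambda>x. u $ 0 * x) ` snd X = snd Y)"

(* Psi(a,l0) is isomorphic in CC(X~) to (A,L0): there is a C((z))[[lambda]]-linear
   bijection Phi : C((z))[[lambda]]^2 -> C((zt))[[lambda]] (determined by the images
   p1, p2 of the basis vectors) compatible with the connections (using dz = (dz/dzt) dzt)
   and mapping L0 onto l0 modulo lambda *)
definition Psi_iso :: "complex fps \<Rightarrow> complex fps \<Rightarrow> complex fls fps \<times> complex fls set
                       \<Rightarrow> complex fls fps mat2 \<times> (complex fls \<times> complex fls) set \<Rightarrow> bool" where
  "Psi_iso t d X Y \<longleftrightarrow> (\<exists>p1 p2.
      let Phi = (\<lambda>s. inclU t d (fst s) * p1 + inclU t d (snd s) * p2);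
          Phi0 = (\<lambda>v. inclL t d (fst v) * p1 $ 0 + inclL t d (snd v) * p2 $ 0)
      in bij Phi \<and>
         (\<forall>s. tdelta (fst X) (Phi s) = dzdzt t d * Phi (nabla (fst Y) s)) \<and>
         Phi0 ` snd Y = snd X)"

end

theory Submission
  imports Defs
begin

notation fls_nth (infixl "$$" 75)



lemma dsp_nth [simp]: "dsp F $ n = fls_deriv (F $ n)"
  by (simp add: dsp_def)

lemma dsp_add [simp]: "dsp (F + G) = dsp F + dsp G"
  by (simp add: fps_eq_iff)
lemma dsp_diff [simp]: "dsp (F - G) = dsp F - dsp G"
  by (simp add: fps_eq_iff)
lemma dsp_uminus [simp]: "dsp (- F) = - dsp F"
  by (simp add: fps_eq_iff)
lemma dsp_zero [simp]: "dsp 0 = 0"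
  by (simp add: fps_eq_iff)
lemma dsp_one [simp]: "dsp 1 = 0"
  by (simp add: fps_eq_iff fps_one_nth)
lemma dsp_const [simp]: "dsp (fps_const c) = fps_const (fls_deriv c)"
  by (simp add: fps_eq_iff)
lemma dsp_mult [simp]: "dsp (F * G) = dsp F * G + F * dsp G"
proof (rule fps_ext)
  fix n show "dsp (F * G) $ n = (dsp F * G + F * dsp G) $ n"
    by (simp add: fps_mult_nth fls_deriv_sum sum.distrib add.commute)
qed
lemma dsp_lam [simp]: "dsp lam = 0"
  by (simp add: fps_eq_iff fps_X_def)
lemma dsp_fps_deriv: "dsp (fps_deriv F) = fps_deriv (dsp F)"
  by (simp add: fps_eq_iff fls_of_nat)






definition fl :: "complex fls \<Rightarrow> complex fls" where
  "fl x = fls_compose_fps x (- fps_X)"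

definition Fl :: "complex fls fps \<Rightarrow> complex fls fps" where
  "Fl F = Abs_fps (\<lambda>n. fl (F $ n))"

lemma mX_ne [simp]: "(- fps_X :: complex fps) \<noteq> 0"
  by (metis fps_X_neq_zero neg_equal_0_iff_equal)
lemma mX_0 [simp]: "(- fps_X :: complex fps) $ 0 = 0"
  by simp

lemma fl_nth: "fl x $$ n = x $$ n * (-1) powi n"
proof -
  have "fl x = fls_compose_fps x (fps_const (-1) * fps_X)"
  proof -
    have "fps_const (-1::complex) * fps_X = - fps_X"
      by (simp flip: fps_const_neg)
    then show ?thesis by (simp only: fl_def)
  qed
  then show ?thesis
    using fls_nth_fls_compose_fps_linear[of "-1" x n] by simp
qed

lemma fl_mult [simp]: "fl (x * y) = fl x * fl y"
  by (simp add: fl_def fls_compose_fps_mult)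
lemma fl_add [simp]: "fl (x + y) = fl x + fl y"
  by (simp add: fl_def fls_compose_fps_add)
lemma fl_diff [simp]: "fl (x - y) = fl x - fl y"
  by (simp add: fl_def fls_compose_fps_diff)
lemma fl_uminus [simp]: "fl (- x) = - fl x"
  by (simp add: fl_def)
lemma fl_zero [simp]: "fl 0 = 0"
  by (simp add: fl_def)
lemma fl_one [simp]: "fl 1 = 1"
  by (simp add: fl_def)
lemma fl_fps [simp]: "fl (fps_to_fls f) = fps_to_fls (f oo - fps_X)"
  by (simp add: fl_def)
lemma fl_eq_0_iff [simp]: "fl x = 0 \<longleftrightarrow> x = 0"
  by (simp add: fl_def fls_compose_fps_eq_0_iff)

lemma neg1_powi_sq: "((-1::complex) powi n) * ((-1) powi n) = 1"
  by (metis mult.commute power_int_minus_one_mult_self)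

lemma neg1_powi_succ: "((-1::complex) powi (n+1)) = - ((-1) powi n)"
  by (simp add: power_int_add)

lemma fl_fl [simp]: "fl (fl x) = x"
  by (rule fls_eqI) (simp add: fl_nth mult.assoc neg1_powi_sq)

lemma fl_deriv: "fl (fls_deriv x) = - fls_deriv (fl x)"
  by (rule fls_eqI) (simp add: fl_nth neg1_powi_succ)

lemma fl_residue: "fl x $$ (-1) = - (x $$ (-1))"
  by (simp add: fl_nth)

lemma fl_sum: "fl (\<Sum>i\<in>A. f i) = (\<Sum>i\<in>A. fl (f i))"
  by (induction A rule: infinite_finite_induct) auto

lemma Fl_nth [simp]: "Fl F $ n = fl (F $ n)"
  by (simp add: Fl_def)
lemma Fl_mult [simp]: "Fl (F * G) = Fl F * Fl G"
  by (simp add: fps_eq_iff fps_mult_nth fl_sum)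
lemma Fl_add [simp]: "Fl (F + G) = Fl F + Fl G"
  by (simp add: fps_eq_iff)
lemma Fl_diff [simp]: "Fl (F - G) = Fl F - Fl G"
  by (simp add: fps_eq_iff)
lemma Fl_uminus [simp]: "Fl (- F) = - Fl F"
  by (simp add: fps_eq_iff)
lemma Fl_const [simp]: "Fl (fps_const c) = fps_const (fl c)"
  by (simp add: fps_eq_iff)
lemma Fl_lam [simp]: "Fl lam = lam"
  by (simp add: fps_eq_iff fps_X_def)
lemma Fl_dsp: "Fl (dsp F) = - dsp (Fl F)"
  by (simp add: fps_eq_iff fl_deriv)




locale setup_td =
  fixes t d :: "complex fps"
  assumes h0: "(t\<^sup>2 - 4 * d) $ 0 = 0" and h1: "(t\<^sup>2 - 4 * d) $ 1 \<noteq> 0"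
begin

abbreviation "Z \<equiv> zser t d"
abbreviation "phi \<equiv> fps_inv (t\<^sup>2 - 4 * d)"

lemma phi0: "phi $ 0 = 0"
  by (simp add: fps_inv_def)
lemma phi1: "phi $ 1 \<noteq> 0"
  using h1 by (simp add: fps_inv_def field_simps)

lemma X2_0: "(fps_X ^ 2 :: complex fps) $ 0 = 0"
  by simp

lemma Z0 [simp]: "Z $ 0 = 0"
  by (simp add: zser_def phi0)

lemma phi_ne: "phi \<noteq> 0"
  using phi1 by auto

lemma Z_ne [simp]: "Z \<noteq> 0"
  using phi_ne phi0 by (simp add: zser_def fps_compose_eq_0_iff)

lemma X2_even: "(fps_X ^ 2 :: complex fps) oo - fps_X = fps_X ^ 2"
proof -
  have "(fps_X oo - fps_X) ^ 2 = (fps_X ^ 2 :: complex fps) oo - fps_X"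
    by (rule fps_compose_power) simp
  moreover have "(fps_X :: complex fps) oo - fps_X = - fps_X"
    by (simp add: fps_X_fps_compose_startby0)
  ultimately show ?thesis by simp
qed

lemma Z_even: "Z oo - fps_X = Z"
proof -
  have "Z oo - fps_X = phi oo (fps_X ^ 2 oo - fps_X)"
    unfolding zser_def by (rule fps_compose_assoc[symmetric]) simp_all
  then show ?thesis by (simp add: X2_even zser_def)
qed

lemma incl_even: "(f oo Z) oo - fps_X = f oo Z"
proof -
  have "(f oo Z) oo - fps_X = f oo (Z oo - fps_X)"
    by (rule fps_compose_assoc[symmetric]) simp_all
  then show ?thesis by (simp add: Z_even)
qed

lemma dZ_odd: "fps_deriv Z oo - fps_X = - fps_deriv Z"
proof -
  have "fps_deriv (Z oo - fps_X) = (fps_deriv Z oo - fps_X) * fps_deriv (- fps_X)"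
    by (rule fps_compose_deriv) simp
  then have "fps_deriv Z = - (fps_deriv Z oo - fps_X)" by (simp add: Z_even)
  then show ?thesis by (metis minus_minus)
qed

lemma Z1: "Z $ 1 = 0"
proof -
  have "(Z oo - fps_X) $ 1 = - (Z $ 1)"
    by (simp add: fps_compose_uminus')
  then show ?thesis using Z_even by simp
qed

lemma dZ0: "fps_deriv Z $ 0 = 0"
  using Z1 by (simp add: fps_deriv_nth)

lemma inclL_eq: "inclL t d x = fls_compose_fps x Z"
  by (simp add: inclL_def incl_def fls_compose_fps_def)

lemma inclL_fps [simp]: "inclL t d (fps_to_fls f) = fps_to_fls (f oo Z)"
  by (simp add: inclL_eq)

lemma fl_inclL [simp]: "fl (inclL t d x) = inclL t d x"
  by (simp add: inclL_eq fl_def fls_compose_fps_assoc Z_even)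

lemma inclU_nth [simp]: "inclU t d F $ n = inclL t d (F $ n)"
  by (simp add: inclU_def)

lemma inclU_1 [simp]: "inclU t d 1 = 1"
  by (simp add: fps_eq_iff inclL_eq fps_one_nth)
lemma inclU_0 [simp]: "inclU t d 0 = 0"
  by (simp add: fps_eq_iff inclL_eq)

lemma Fl_inclU [simp]: "Fl (inclU t d F) = inclU t d F"
  by (simp add: fps_eq_iff)

definition "JJ = fps_to_fls (fps_deriv Z)"

lemma fl_JJ [simp]: "fl JJ = - JJ"
  by (simp add: JJ_def dZ_odd)

lemma dzdzt_eq: "dzdzt t d = fps_const JJ"
  by (simp add: dzdzt_def JJ_def)

end





lemma res_logderiv:
  fixes W :: "complex fls fps"
  assumes W0: "W $ 0 \<noteq> 0"
  shows "(dsp W * inverse W) $ (Suc m) $$ (-1) = 0"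
proof -
  define G where "G = inverse W"
  have WG: "W * G = 1" using W0 by (simp add: G_def inverse_mult_eq_1')
  have "dsp (W * G) = 0" using WG by simp
  then have e1: "dsp W * G + W * dsp G = 0" by simp
  have dG: "dsp G = - dsp W * G * G"
  proof -
    have "G * (dsp W * G + W * dsp G) = 0" using e1 by simp
    then have "G * dsp W * G + (W * G) * dsp G = 0" by (simp add: algebra_simps)
    then have "G * dsp W * G + dsp G = 0" using WG by simp
    then show ?thesis by (simp add: algebra_simps eq_neg_iff_add_eq_0 add.commute)
  qed
  have fG: "fps_deriv G = - fps_deriv W * G\<^sup>2"
    using W0 by (simp add: G_def fps_inverse_deriv)
  have key: "fps_deriv (dsp W * G) = dsp (G * fps_deriv W)"
    by (simp add: dG fG dsp_fps_deriv power2_eq_square algebra_simps)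
  have "fps_deriv (dsp W * G) $ m $$ (-1) = 0"
    unfolding key dsp_nth by (rule fls_deriv_residue)
  then have "of_nat (Suc m) * ((dsp W * G) $ Suc m $$ (-1)) = 0"
    by (simp only: fps_deriv_nth fls_mult_of_nat_nth Suc_eq_plus1)
  moreover have "1 + complex_of_nat m \<noteq> 0"
    by (metis of_nat_Suc of_nat_neq_0 add.commute)
  ultimately show ?thesis by (simp add: G_def del: dsp_mult)
qed






definition nxt :: "complex fls fps \<Rightarrow> (complex fls \<times> complex fls) list \<Rightarrow> complex fls \<times> complex fls" where
  "nxt a L = (let m = length L;
                  S = (\<Sum>i\<in>{1..<m}. fst (L!i) * snd (L!(m-i)));
                  q = - (a $ (m+1));
                  h = q - fls_const ((q + S) $$ (-1)) * fls_X_inv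
              in (fls_integral (h + S), h))"

fun rc :: "complex fls fps \<Rightarrow> nat \<Rightarrow> (complex fls \<times> complex fls) list" where
  "rc a 0 = [(1,0)]"
| "rc a (Suc m) = rc a m @ [nxt a (rc a m)]"

lemma rc_len [simp]: "length (rc a m) = Suc m"
  by (induction m) auto

lemma rc_prefix: "i \<le> m \<Longrightarrow> rc a m ! i = rc a i ! i"
proof (induction m)
  case 0 then show ?case by simp
next
  case (Suc m)
  show ?case
  proof (cases "i = Suc m")
    case True then show ?thesis by simp
  next
    case False
    then have "i \<le> m" using Suc.prems by simp
    then have "rc a (Suc m) ! i = rc a m ! i" by (simp add: nth_append)
    then show ?thesis using Suc.IH \<open>i \<le> m\<close> by simp
  qed
qed

definition "VV a = Abs_fps (\<lambda>n. fst (rc a n ! n))"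
definition "HH a = Abs_fps (\<lambda>n. snd (rc a n ! n))"

definition "SS a m = (\<Sum>i\<in>{1..<m}. VV a $ i * HH a $ (m - i))"

lemma VV0 [simp]: "VV a $ 0 = 1" by (simp add: VV_def)
lemma HH0 [simp]: "HH a $ 0 = 0" by (simp add: HH_def)

lemma rc_suc_last: "rc a (Suc k) ! Suc k = nxt a (rc a k)"
  using nth_append_length[of "rc a k" "nxt a (rc a k)"] by simp

lemma S_eq: "(\<Sum>i\<in>{1..<Suc k}. fst (rc a k ! i) * snd (rc a k ! (Suc k - i))) = SS a (Suc k)"
proof -
  have v: "fst (rc a k ! i) = VV a $ i" if "i \<le> k" for i
    using rc_prefix[OF that, of a] by (simp add: VV_def)
  have h: "snd (rc a k ! i) = HH a $ i" if "i \<le> k" for i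
    using rc_prefix[OF that, of a] by (simp add: HH_def)
  show ?thesis
    unfolding SS_def by (rule sum.cong) (auto simp: v h)
qed

lemma HH_suc: "HH a $ Suc k = - (a $ (Suc k + 1)) - fls_const ((- (a $ (Suc k + 1)) + SS a (Suc k)) $$ (-1)) * fls_X_inv"
proof -
  have "HH a $ Suc k = snd (nxt a (rc a k))" unfolding HH_def by (simp del: rc.simps add: rc_suc_last)
  then show ?thesis by (simp only: nxt_def Let_def rc_len S_eq snd_conv)
qed

lemma VV_suc: "VV a $ Suc k = fls_integral (HH a $ Suc k + SS a (Suc k))"
proof -
  have "VV a $ Suc k = fst (nxt a (rc a k))" unfolding VV_def by (simp del: rc.simps add: rc_suc_last)
  moreover have "HH a $ Suc k = snd (nxt a (rc a k))" unfolding HH_def by (simp del: rc.simps add: rc_suc_last)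
  ultimately show ?thesis by (simp only: nxt_def Let_def rc_len S_eq snd_conv fst_conv)
qed

lemma res_HS: "(HH a $ Suc k + SS a (Suc k)) $$ (-1) = 0"
  unfolding HH_suc by (simp only: fls_plus_nth fls_minus_nth fls_uminus_nth fls_mult_const_nth fls_X_inv_nth) simp

lemma deriv_VV_suc: "fls_deriv (VV a $ Suc k) = HH a $ Suc k + SS a (Suc k)"
  unfolding VV_suc by (rule fls_deriv_fls_integral) (simp add: res_HS del: fls_plus_nth)

lemma dsp_VV: "dsp (VV a) = VV a * HH a"
proof (rule fps_ext)
  fix n
  show "dsp (VV a) $ n = (VV a * HH a) $ n"
  proof (cases n)
    case 0 then show ?thesis by (simp only: dsp_nth VV0 fps_mult_nth_0 HH0 mult_zero_right fls_deriv_one)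
  next
    case (Suc k)
    have "(VV a * HH a) $ n = (\<Sum>i=0..n. VV a $ i * HH a $ (n - i))"
      by (simp add: fps_mult_nth)
    also have "\<dots> = VV a $ 0 * HH a $ n + (\<Sum>i=1..n. VV a $ i * HH a $ (n - i))"
      using sum.atLeast_Suc_atMost[of 0 n "\<lambda>i. VV a $ i * HH a $ (n - i)"] by simp
    also have "(\<Sum>i=1..n. VV a $ i * HH a $ (n - i)) = SS a n + VV a $ n * HH a $ 0"
    proof -
      have "(\<Sum>i=1..n. VV a $ i * HH a $ (n - i)) = VV a $ n * HH a $ (n - n) + (\<Sum>i=1..<n. VV a $ i * HH a $ (n - i))"
        by (rule sum.last_plus) (simp add: Suc)
      then show ?thesis unfolding SS_def by (simp only: diff_self_eq_0 add.commute)
    qed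
    finally have "(VV a * HH a) $ n = HH a $ n + SS a n" by (simp only: VV0 HH0 mult_1_left mult_zero_right add_0_right)
    moreover have "dsp (VV a) $ n = HH a $ n + SS a n"
      unfolding dsp_nth Suc by (rule deriv_VV_suc)
    ultimately show ?thesis by (simp only:)
  qed
qed

lemma b_suc: "a $ (Suc k + 1) + HH a $ Suc k = - fls_const ((- (a $ (Suc k + 1)) + SS a (Suc k)) $$ (-1)) * fls_X_inv"
  unfolding HH_suc by (simp only: add_diff_cancel_left' diff_conv_add_uminus add.assoc[symmetric] add.right_inverse add_0 mult_minus_left) 

lemma HH_res:
  "HH a $ Suc k $$ (-1) = 0"
proof -
  have i1: "inverse (VV a) * VV a = 1" by (rule inverse_mult_eq_1) simp
  have "inverse (VV a) * dsp (VV a) = (inverse (VV a) * VV a) * HH a"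
    by (simp only: dsp_VV mult.assoc)
  then have "HH a = inverse (VV a) * dsp (VV a)" by (simp only: i1 mult_1_left)
  then have "HH a = dsp (VV a) * inverse (VV a)" by (simp only: mult.commute)
  then show ?thesis using res_logderiv[of "VV a" k] by (simp only: VV0) simp
qed




lemma order1_alg:
  fixes a0 a1 fa0 J P1 P2 fP1 fP2 Q1 Q2 dP1 dP2 x11 x12 x21 x22 y11 y12 y21 y22 :: "'a::comm_ring_1"
  assumes e11: "dP1 + a0*Q1 + a1*P1 = J*(x11*Q1 + y11*P1 + x21*Q2 + y21*P2)"
    and e21: "dP2 + a0*Q2 + a1*P2 = J*(x12*Q1 + y12*P1 + x22*Q2 + y22*P2)"
    and f10: "fa0 * fP1 = - J*(x11*fP1 + x21*fP2)"
    and f20: "fa0 * fP2 = - J*(x12*fP1 + x22*fP2)"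
    and tr: "a0 - fa0 = J*(x11 + x22)"
  shows "a1*(P1*fP2 - P2*fP1) = J*((y11*P1 + y21*P2)*fP2 - (y12*P1 + y22*P2)*fP1) - (dP1*fP2 - dP2*fP1)"
proof -
  define D1 where "D1 = dP1 + a0*Q1 + a1*P1 - J*(x11*Q1 + y11*P1 + x21*Q2 + y21*P2)"
  define D2 where "D2 = dP2 + a0*Q2 + a1*P2 - J*(x12*Q1 + y12*P1 + x22*Q2 + y22*P2)"
  define F1 where "F1 = fa0 * fP1 + J*(x11*fP1 + x21*fP2)"
  define F2 where "F2 = fa0 * fP2 + J*(x12*fP1 + x22*fP2)"
  define T where "T = a0 - fa0 - J*(x11 + x22)"
  have z: "D1 = 0" "D2 = 0" "F1 = 0" "F2 = 0" "T = 0"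
    using assms by (simp_all add: D1_def D2_def F1_def F2_def T_def)
  have "a1*(P1*fP2 - P2*fP1) - (J*((y11*P1 + y21*P2)*fP2 - (y12*P1 + y22*P2)*fP1) - (dP1*fP2 - dP2*fP1))
        = D1*fP2 - D2*fP1 - Q1*(T*fP2 + F2) + Q2*(T*fP1 + F1)"
    unfolding D1_def D2_def F1_def F2_def T_def by (simp add: algebra_simps)
  then show ?thesis using z by simp
qed

lemma heart_alg:
  fixes L a fa J dp1 dp2 dq1 dq2 p1 p2 q1 q2 x11 x12 x21 x22 :: "'a::comm_ring_1"
  assumes e1: "L*dp1 + a*p1 = J*(x11*p1 + x21*p2)"
    and e2: "L*dp2 + a*p2 = J*(x12*p1 + x22*p2)"
    and f1: "- (L*dq1) + fa*q1 = - J*(x11*q1 + x21*q2)"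
    and f2: "- (L*dq2) + fa*q2 = - J*(x12*q1 + x22*q2)"
  shows "L*(dp1*q2 + p1*dq2 - dp2*q1 - p2*dq1) = (J*(x11 + x22) - a + fa) * (p1*q2 - p2*q1)"
proof -
  define D1 where "D1 = L*dp1 + a*p1 - J*(x11*p1 + x21*p2)"
  define D2 where "D2 = L*dp2 + a*p2 - J*(x12*p1 + x22*p2)"
  define F1 where "F1 = - (L*dq1) + fa*q1 + J*(x11*q1 + x21*q2)"
  define F2 where "F2 = - (L*dq2) + fa*q2 + J*(x12*q1 + x22*q2)"
  have z: "D1 = 0" "D2 = 0" "F1 = 0" "F2 = 0"
    using assms by (simp_all add: D1_def D2_def F1_def F2_def)
  have "L*(dp1*q2 + p1*dq2 - dp2*q1 - p2*dq1) - (J*(x11 + x22) - a + fa) * (p1*q2 - p2*q1)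
        = D1*q2 - p1*F2 - D2*q1 + p2*F1"
    unfolding D1_def D2_def F1_def F2_def by (simp add: algebra_simps)
  then show ?thesis using z by simp
qed

lemma lattice_alg:
  fixes E1 E2 E3 E4 G1 G2 fG1 fG2 X :: "'a::comm_ring_1"
  assumes "E1*G1 + E2*G2 = 1" "E3*G1 + E4*G2 = X" "E1*fG1 + E2*fG2 = 1" "E3*fG1 + E4*fG2 = - X"
  shows "(E1*E4 - E2*E3) * (G1*fG2 - G2*fG1) = - 2 * X"
proof -
  have "(E1*E4 - E2*E3) * (G1*fG2 - G2*fG1) = (E1*G1 + E2*G2)*(E3*fG1 + E4*fG2) - (E3*G1 + E4*G2)*(E1*fG1 + E2*fG2)"
    by (simp add: algebra_simps)
  also have "\<dots> = - 2 * X" using assms by simp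
  finally show ?thesis .
qed






lemma mmap_simps [simp]:
  "m11 (mmap f A) = f (m11 A)" "m12 (mmap f A) = f (m12 A)"
  "m21 (mmap f A) = f (m21 A)" "m22 (mmap f A) = f (m22 A)"
  by (simp_all add: mmap_def m11_def m12_def m21_def m22_def)

lemma embL_nth [simp]: "embL f $ n = fps_to_fls (f $ n)"
  by (simp add: embL_def)

lemma ffl_nth: "((G :: complex fps) oo - fps_X) $ n = (-1)^n * G $ n"
  by (simp add: fps_compose_uminus')

context setup_td
begin

lemma al_nth [simp]: "inclU t d (embL f) $ n = fps_to_fls (f $ n oo Z)"
  by simp

lemma fl_reg_even [simp]: "fl (fps_to_fls (f oo Z)) = fps_to_fls (f oo Z)"
  by (simp add: incl_even)

lemma mu_tr: "mu t d - fl (mu t d) = JJ * fps_to_fls (t oo Z)"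
proof -
  have m: "(-fps_X :: complex fps) $ 0 = 0" by simp
  define M where "M = fps_const (1/2) * ((t oo Z) + fps_X) * fps_deriv Z"
  have M1: "M oo - fps_X = fps_const (1/2) * ((t oo Z) - fps_X) * (- fps_deriv Z)"
    unfolding M_def
    by (simp add: fps_compose_mult_distrib[OF m] fps_compose_add_distrib incl_even dZ_odd
                  fps_X_fps_compose_startby0)
  have h2: "fps_const (1/2::complex) * 2 = 1"
    by (metis fps_const_1_eq_1 fps_const_mult fps_numeral_fps_const mult.commute
              nonzero_divide_eq_eq zero_neq_numeral divide_self_if)
  have "M - (M oo - fps_X) = (fps_const (1/2) * 2) * ((t oo Z) * fps_deriv Z)"
    unfolding M1 unfolding M_def by (simp add: algebra_simps)
  then have M2: "M - (M oo - fps_X) = fps_deriv Z * (t oo Z)"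
    by (simp add: h2 mult.commute)
  have "mu t d = fps_to_fls M" by (simp add: mu_def M_def incl_def)
  then show ?thesis
    by (simp add: JJ_def fls_times_fps_to_fls[symmetric] M2 flip: fps_to_fls_minus)
qed

end






context setup_td
begin

lemma main:
  assumes conn: "is_Conn t d A" and tcc: "is_tCC t d a l0"
    and psi: "Psi_iso t d (a, l0) (conn_to_cc A)"
  shows "\<exists>b. is_tConn t d b \<and> tCC_iso (tconn_to_tcc b) (a, l0)"
proof -
  have a0: "a $ 0 = mu t d" using tcc by (simp add: is_tCC_def)
  obtain c where c0: "c \<noteq> 0" and l0: "l0 = {fps_to_fls f * c | f. True}"
    using tcc by (auto simp: is_tCC_def lattice1_def)
  obtain p1 p2 where
    H1: "\<forall>s. tdelta a (inclU t d (fst s) * p1 + inclU t d (snd s) * p2) =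
             dzdzt t d * (inclU t d (fst (nabla (mmap embL A) s)) * p1 + inclU t d (snd (nabla (mmap embL A) s)) * p2)"
    and H2: "(\<lambda>v. inclL t d (fst v) * p1 $ 0 + inclL t d (snd v) * p2 $ 0) ` {(fps_to_fls f1, fps_to_fls f2) | f1 f2. True} = l0"
    using psi unfolding Psi_iso_def Let_def conn_to_cc_def fst_conv snd_conv by blast
  define al11 where "al11 = inclU t d (embL (m11 A))"
  define al12 where "al12 = inclU t d (embL (m12 A))"
  define al21 where "al21 = inclU t d (embL (m21 A))"
  define al22 where "al22 = inclU t d (embL (m22 A))"
  have E1: "lam * dsp p1 + a * p1 = fps_const JJ * (al11 * p1 + al21 * p2)"
    using H1[rule_format, of "(1,0)"]
    by (simp add: tdelta_def nabla_def dzdzt_eq al11_def al21_def)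
  have E2: "lam * dsp p2 + a * p2 = fps_const JJ * (al12 * p1 + al22 * p2)"
    using H1[rule_format, of "(0,1)"]
    by (simp add: tdelta_def nabla_def dzdzt_eq al12_def al22_def)
  define x11 where "x11 = fps_to_fls (m11 A $ 0 oo Z)"
  define x12 where "x12 = fps_to_fls (m12 A $ 0 oo Z)"
  define x21 where "x21 = fps_to_fls (m21 A $ 0 oo Z)"
  define x22 where "x22 = fps_to_fls (m22 A $ 0 oo Z)"
  define y11 where "y11 = fps_to_fls (m11 A $ 1 oo Z)"
  define y12 where "y12 = fps_to_fls (m12 A $ 1 oo Z)"
  define y21 where "y21 = fps_to_fls (m21 A $ 1 oo Z)"
  define y22 where "y22 = fps_to_fls (m22 A $ 1 oo Z)"
  have c0E1: "a$0 * p1$0 = JJ * (x11 * p1$0 + x21 * p2$0)"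
    using arg_cong[where f="\<lambda>F. F$0", OF E1] by (simp add: al11_def al21_def x11_def x21_def)
  have c0E2: "a$0 * p2$0 = JJ * (x12 * p1$0 + x22 * p2$0)"
    using arg_cong[where f="\<lambda>F. F$0", OF E2] by (simp add: al12_def al22_def x12_def x22_def)
  have c1E1: "fls_deriv (p1$0) + a$0 * p1$1 + a$1 * p1$0 = JJ * (x11 * p1$1 + y11 * p1$0 + x21 * p2$1 + y21 * p2$0)"
    using arg_cong[where f="\<lambda>F. F$1", OF E1]
    by (simp add: al11_def al21_def x11_def x21_def y11_def y21_def fps_mult_nth_1 algebra_simps)
  have c1E2: "fls_deriv (p2$0) + a$0 * p2$1 + a$1 * p2$0 = JJ * (x12 * p1$1 + y12 * p1$0 + x22 * p2$1 + y22 * p2$0)"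
    using arg_cong[where f="\<lambda>F. F$1", OF E2]
    by (simp add: al12_def al22_def x12_def x22_def y12_def y22_def fps_mult_nth_1 algebra_simps)
  have f10: "fl (a$0) * fl (p1$0) = - JJ * (x11 * fl (p1$0) + x21 * fl (p2$0))"
    using arg_cong[where f=fl, OF c0E1] by (simp add: x11_def x21_def incl_even)
  have f20: "fl (a$0) * fl (p2$0) = - JJ * (x12 * fl (p1$0) + x22 * fl (p2$0))"
    using arg_cong[where f=fl, OF c0E2] by (simp add: x12_def x22_def incl_even)
  have tr: "a$0 - fl (a$0) = JJ * (x11 + x22)"
  proof -
    have "x11 + x22 = fps_to_fls (t oo Z)"
      using conn by (simp add: is_Conn_def x11_def x22_def flip: fps_to_fls_plus fps_compose_add_distrib)
    then show ?thesis using a0 mu_tr by simp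
  qed
  have claim: "a$1 * (p1$0 * fl (p2$0) - p2$0 * fl (p1$0)) =
     JJ * ((y11 * p1$0 + y21 * p2$0) * fl (p2$0) - (y12 * p1$0 + y22 * p2$0) * fl (p1$0))
     - (fls_deriv (p1$0) * fl (p2$0) - fls_deriv (p2$0) * fl (p1$0))"
    by (rule order1_alg[OF c1E1 c1E2 f10 f20 tr])
  have mem: "inclL t d (fps_to_fls f1) * p1 $ 0 + inclL t d (fps_to_fls f2) * p2 $ 0 \<in> l0" for f1 f2
  proof -
    have "(fps_to_fls f1, fps_to_fls f2) \<in> {(fps_to_fls f1, fps_to_fls f2) | f1 f2. True}" by blast
    then have "(\<lambda>v. inclL t d (fst v) * p1 $ 0 + inclL t d (snd v) * p2 $ 0) (fps_to_fls f1, fps_to_fls f2) \<in> l0"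
      unfolding H2[symmetric] by (rule imageI)
    then show ?thesis by simp
  qed
  obtain G1 where G1: "p1$0 = fps_to_fls G1 * c"
    using mem[of 1 0] l0 by (auto simp: inclL_eq)
  obtain G2 where G2: "p2$0 = fps_to_fls G2 * c"
    using mem[of 0 1] l0 by (auto simp: inclL_eq)
  have "c \<in> l0" using l0 by (auto intro!: exI[of _ 1])
  then obtain F1 F2 where F12: "c = fps_to_fls (F1 oo Z) * p1$0 + fps_to_fls (F2 oo Z) * p2$0"
    using H2 by auto
  have "c * fls_X \<in> l0" using l0 by (auto intro!: exI[of _ fps_X])
  then obtain F3 F4 where F34: "c * fls_X = fps_to_fls (F3 oo Z) * p1$0 + fps_to_fls (F4 oo Z) * p2$0"
    using H2 by auto
  define E1 where "E1 = F1 oo Z"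
  define E2 where "E2 = F2 oo Z"
  define E3 where "E3 = F3 oo Z"
  define E4 where "E4 = F4 oo Z"
  have EG1: "E1 * G1 + E2 * G2 = 1"
  proof -
    have "1 * c = fps_to_fls (E1 * G1 + E2 * G2) * c"
      using F12 by (simp add: G1 G2 E1_def E2_def fls_times_fps_to_fls algebra_simps)
    then have "fps_to_fls (E1 * G1 + E2 * G2) = 1" using c0 by (simp only: mult_cancel_right) simp
    then show ?thesis by (simp only: fps_to_fls_eq_1_iff)
  qed
  have EG2: "E3 * G1 + E4 * G2 = fps_X"
  proof -
    have "fls_X * c = fps_to_fls (E3 * G1 + E4 * G2) * c"
      using F34 by (simp add: G1 G2 E3_def E4_def fls_times_fps_to_fls algebra_simps)
    then have "fps_to_fls (E3 * G1 + E4 * G2) = fps_to_fls fps_X" using c0 by (simp only: mult_cancel_right) simp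
    then show ?thesis by (simp only: fps_to_fls_eq_iff)
  qed
  have m: "(-fps_X :: complex fps) $ 0 = 0" by simp
  define fG1 where "fG1 = G1 oo - fps_X"
  define fG2 where "fG2 = G2 oo - fps_X"
  have ev: "E1 oo - fps_X = E1" "E2 oo - fps_X = E2" "E3 oo - fps_X = E3" "E4 oo - fps_X = E4"
    by (simp_all add: E1_def E2_def E3_def E4_def incl_even)
  have EG1f: "E1 * fG1 + E2 * fG2 = 1"
    using arg_cong[where f="\<lambda>F. F oo - fps_X", OF EG1]
    by (simp add: fps_compose_add_distrib fps_compose_mult_distrib[OF m] ev fG1_def fG2_def)
  have EG2f: "E3 * fG1 + E4 * fG2 = - fps_X"
    using arg_cong[where f="\<lambda>F. F oo - fps_X", OF EG2]
    by (simp add: fps_compose_add_distrib fps_compose_mult_distrib[OF m] ev fG1_def fG2_def fps_X_fps_compose_startby0)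
  define Det where "Det = E1 * E4 - E2 * E3"
  define Wg where "Wg = G1 * fG2 - G2 * fG1"
  have DW: "Det * Wg = - 2 * fps_X"
    unfolding Det_def Wg_def by (rule lattice_alg[OF EG1 EG2 EG1f EG2f])
  have Wg0: "Wg $ 0 = 0" by (simp add: Wg_def fG1_def fG2_def ffl_nth)
  have Wg1: "Wg $ 1 = 2 * (G1$1 * G2$0 - G1$0 * G2$1)"
    by (simp add: Wg_def fG1_def fG2_def ffl_nth fps_mult_nth_1 algebra_simps)
  have key0: "Det $ 0 * (G1$1 * G2$0 - G1$0 * G2$1) = -1"
  proof -
    have "(Det * Wg) $ 1 = -2" using DW by simp
    then have "Det $ 0 * Wg $ 1 = -2" by (simp add: fps_mult_nth_1 Wg0)
    then have "2 * (Det $ 0 * (G1$1 * G2$0 - G1$0 * G2$1)) = 2 * (-1::complex)"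
      unfolding Wg1 by (simp only: mult.left_commute) simp
    then show ?thesis by (simp only: mult_cancel_left) simp
  qed
  have Wg_ne: "Wg \<noteq> 0" using DW by auto
  define g1 where "g1 = fps_to_fls G1"
  define g2 where "g2 = fps_to_fls G2"
  define fg1 where "fg1 = fps_to_fls fG1"
  define fg2 where "fg2 = fps_to_fls fG2"
  define fc where "fc = fl c"
  have fc0: "fc \<noteq> 0" using c0 by (simp add: fc_def)
  have flP1: "fl (p1$0) = fg1 * fc" by (simp add: G1 fg1_def fG1_def fc_def)
  have flP2: "fl (p2$0) = fg2 * fc" by (simp add: G2 fg2_def fG2_def fc_def)
  have dP1: "fls_deriv (p1$0) = g1 * fls_deriv c + fls_deriv g1 * c" by (simp add: G1 g1_def)
  have dP2: "fls_deriv (p2$0) = g2 * fls_deriv c + fls_deriv g2 * c" by (simp add: G2 g2_def)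
  define Wl where "Wl = g1 * fg2 - g2 * fg1"
  define Bl where "Bl = (y11 * g1 + y21 * g2) * fg2 - (y12 * g1 + y22 * g2) * fg1"
  define Rl where "Rl = fls_deriv g1 * fg2 - fls_deriv g2 * fg1"
  define b1 where "b1 = a$1 + fls_deriv c / c"
  have claim2: "a$1 * (c * fc * Wl) = c * fc * (JJ * Bl) - (fc * fls_deriv c * Wl + c * fc * Rl)"
    using claim unfolding flP1 flP2 dP1 dP2 unfolding G1 G2 Wl_def Bl_def Rl_def g1_def[symmetric] g2_def[symmetric]
    by (simp add: algebra_simps)
  have b1W: "b1 * Wl = JJ * Bl - Rl"
  proof -
    have "c * fc * (b1 * Wl) = a$1 * (c * fc * Wl) + fc * (c * (fls_deriv c / c)) * Wl"
      by (simp add: b1_def algebra_simps)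
    also have "c * (fls_deriv c / c) = fls_deriv c" using c0 by simp
    finally have "c * fc * (b1 * Wl) = c * fc * (JJ * Bl - Rl)"
      using claim2 by (simp add: algebra_simps)
    then show ?thesis using c0 fc0 by simp
  qed
  define BF where "BF = ((m11 A $ 1 oo Z) * G1 + (m21 A $ 1 oo Z) * G2) * fG2 - ((m12 A $ 1 oo Z) * G1 + (m22 A $ 1 oo Z) * G2) * fG1"
  define RF where "RF = fps_deriv G1 * fG2 - fps_deriv G2 * fG1"
  define Rf where "Rf = fps_deriv Z * BF - RF"
  have R_eq: "JJ * Bl - Rl = fps_to_fls Rf"
    unfolding Rf_def BF_def RF_def Bl_def Rl_def JJ_def y11_def y12_def y21_def y22_def g1_def g2_def fg1_def fg2_def
    by (simp add: fls_deriv_fps_to_fls flip: fls_times_fps_to_fls fps_to_fls_plus fps_to_fls_minus)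
  have Wl_eq: "Wl = fps_to_fls Wg"
    unfolding Wl_def Wg_def g1_def g2_def fg1_def fg2_def
    by (simp flip: fls_times_fps_to_fls fps_to_fls_minus)
  have main1: "b1 * fps_to_fls (Det * Wg) = fps_to_fls (Rf * Det)"
    using b1W unfolding R_eq Wl_eq by (simp add: fls_times_fps_to_fls algebra_simps)
  then have main2: "- (2 * (b1 * fls_X)) = fps_to_fls (Rf * Det)"
    unfolding DW by (simp add: fls_times_fps_to_fls mult.left_commute)
  have shiftb: "(b1 * fls_X) $$ (k + 1) = b1 $$ k" for k
    by (simp add: fls_X_times_conv_shift(2))
  have bcoef: "- (2 * b1 $$ k) = (if k + 1 < 0 then 0 else (Rf * Det) $ nat (k + 1))" for k
    using arg_cong[where f="\<lambda>F. F $$ (k+1)", OF main2] by (simp add: shiftb)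
  have b1_low: "b1 $$ k = 0" if "k < -1" for k
    using bcoef[of k] that by simp
  have Rf0: "Rf $ 0 * Det $ 0 = 1"
  proof -
    have r: "Rf $ 0 = - (G1$1 * G2$0 - G1$0 * G2$1)"
      using Z1 by (simp add: Rf_def RF_def fG1_def fG2_def mult.commute)
    have "Rf $ 0 * Det $ 0 = - (Det $ 0 * (G1$1 * G2$0 - G1$0 * G2$1))"
      unfolding r by (simp only: mult.commute[of _ "Det $ 0"] mult_minus_right)
    then show ?thesis unfolding key0 by simp
  qed
  have b1_res: "b1 $$ (-1) = - 1/2"
  proof -
    have "- (2 * b1 $$ (-1)) = 1" using bcoef[of "-1"] Rf0 by simp
    then show ?thesis by (simp add: field_simps) (metis add.inverse_inverse mult_minus_right)
  qed
  have FE1: "- (lam * dsp (Fl p1)) + Fl a * Fl p1 = - fps_const JJ * (al11 * Fl p1 + al21 * Fl p2)"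
    using arg_cong[where f=Fl, OF E1] by (simp add: Fl_dsp al11_def al21_def)
  have FE2: "- (lam * dsp (Fl p2)) + Fl a * Fl p2 = - fps_const JJ * (al12 * Fl p1 + al22 * Fl p2)"
    using arg_cong[where f=Fl, OF E2] by (simp add: Fl_dsp al12_def al22_def)
  define W where "W = p1 * Fl p2 - p2 * Fl p1"
  define Mm where "Mm = fps_const JJ * (al11 + al22) - a + Fl a"
  have hW: "lam * dsp W = Mm * W"
    using heart_alg[OF E1 E2 FE1 FE2] by (simp add: W_def Mm_def diff_diff_eq)
  have W0: "W $ 0 = c * fc * Wl"
  proof -
    have "W $ 0 = p1$0 * fl (p2$0) - p2$0 * fl (p1$0)" by (simp add: W_def)
    also have "\<dots> = c * fc * Wl"
      unfolding flP1 flP2 unfolding G1 G2 Wl_def g1_def g2_def by (simp add: algebra_simps)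
    finally show ?thesis .
  qed
  have W0ne: "W $ 0 \<noteq> 0"
    using c0 fc0 Wg_ne by (simp add: W0 Wl_eq)
  have Mm_eq: "Mm = lam * (dsp W * inverse W)"
  proof -
    have "W * inverse W = 1" using W0ne by (rule inverse_mult_eq_1')
    then have "Mm = Mm * W * inverse W" by (simp add: mult.assoc)
    also have "\<dots> = lam * (dsp W * inverse W)" by (simp add: hW[symmetric] mult.assoc)
    finally show ?thesis .
  qed
  have resa: "a $ Suc (Suc m) $$ (-1) = 0" for m
  proof -
    have "Mm $ Suc (Suc m) $$ (-1) = 0"
      using res_logderiv[OF W0ne, of m] by (simp add: Mm_eq del: dsp_mult)
    moreover have "(JJ * (al11 $ Suc (Suc m) + al22 $ Suc (Suc m))) $$ (-1) = 0"
      by (simp add: JJ_def al11_def al22_def flip: fls_times_fps_to_fls fps_to_fls_plus)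
    ultimately have "- (a $ Suc (Suc m) $$ (-1)) + fl (a $ Suc (Suc m)) $$ (-1) = 0"
      by (simp add: Mm_def)
    then show ?thesis by (simp add: fl_residue)
  qed
  define b where "b = a + lam * (fps_const (fls_deriv c / c) + HH a)"
  define u where "u = fps_const c * VV a"
  have bn0: "b $ 0 = mu t d" by (simp add: b_def a0)
  have bn1: "b $ 1 = b1" by (simp add: b_def b1_def)
  have bnS: "b $ Suc (Suc k) = a $ (Suc k + 1) + HH a $ Suc k" for k by (simp add: b_def)
  have mu_neg: "mu t d $$ k = 0" if "k < 0" for k using that by (simp add: mu_def)
  have tconn: "is_tConn t d b"
    unfolding is_tConn_def
  proof (intro conjI allI impI)
    fix n :: nat and k :: int assume k: "k < -1"
    show "b $ n $$ k = 0"
    proof (cases n)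
      case 0 then show ?thesis using bn0 mu_neg k by simp
    next
      case (Suc n') note n' = this
      show ?thesis
      proof (cases n')
        case 0 then show ?thesis using n' bn1 b1_low k by simp
      next
        case (Suc k') then show ?thesis using n' bnS b_suc k by simp
      qed
    qed
  next
    fix n :: nat
    show "b $ n $$ (-1) = (if n = 1 then - 1/2 else 0)"
    proof (cases n)
      case 0 then show ?thesis using bn0 mu_neg by simp
    next
      case (Suc n') note n' = this
      show ?thesis
      proof (cases n')
        case 0 then show ?thesis using n' bn1 b1_res by simp
      next
        case (Suc k') then show ?thesis using n' bnS resa[of k'] HH_res[of a k'] by simp
      qed
    qed
  next
    show "b $ 0 = mu t d" by (rule bn0)
  qed
  have kc: "fps_const c * fps_const (fls_deriv c / c) = fps_const (fls_deriv c)"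
    using c0 by (simp add: fps_const_mult)
  have iso: "tCC_iso (tconn_to_tcc b) (a, l0)"
    unfolding tCC_iso_def tconn_to_tcc_def fst_conv snd_conv
  proof (intro exI conjI allI)
    show "u $ 0 \<noteq> 0" using c0 by (simp add: u_def)
  next
    fix g
    have r: "u * tdelta b g = lam * (fps_const c * fps_const (fls_deriv c / c)) * VV a * g
               + lam * fps_const c * (VV a * HH a) * g + lam * u * dsp g + a * u * g"
      by (simp add: tdelta_def b_def u_def algebra_simps)
    have l: "tdelta a (u * g) = lam * fps_const (fls_deriv c) * VV a * g
               + lam * fps_const c * (VV a * HH a) * g + lam * u * dsp g + a * u * g"
      by (simp add: tdelta_def u_def dsp_VV algebra_simps)
    show "tdelta a (u * g) = u * tdelta b g" unfolding l r kc ..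
  next
    show "(\<lambda>x. u $ 0 * x) ` {fps_to_fls f | f. True} = l0"
      unfolding l0 by (auto simp: u_def mult.commute)
  qed
  show ?thesis using tconn iso by blast
qed

end


theorem proposition4p13:
  fixes t d :: "complex fps"
    and A :: "complex fps fps mat2"
    and a :: "complex fls fps"
    and l0 :: "complex fls set"
  assumes "(t\<^sup>2 - 4 * d) $ 0 = 0" and "(t\<^sup>2 - 4 * d) $ 1 \<noteq> 0"
    and "is_Conn t d A"
    and "is_tCC t d a l0"
    and "Psi_iso t d (a, l0) (conn_to_cc A)"
  shows "\<exists>b. is_tConn t d b \<and> tCC_iso (tconn_to_tcc b) (a, l0)"
  using setup_td.main[OF setup_td.intro[OF assms(1) assms(2)] assms(3) assms(4) assms(5)] .

end
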